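(* Let $(\Omega,\mathcal{F})$ be a measurable space, $\mathrm{B}_b$ the space of bounded real-valued measurable functions on $\Omega$, and let $H\colon\mathrm{B}_b\to\mathbb{R}$ be a convex premium principle which is continuous from above, i.e. $\inf_{n\in\mathbb{N}}H(X_n)=0$ for every sequence $(X_n)_{n\in\mathbb{N}}\subset\mathrm{B}_b$ with $X_{n+1}\le X_n$ for all $n$ and $\inf_{n}X_n=0$ pointwise. Then $R_{\mathrm{Max}}(X):=\inf\{H(X_0)\mid X_0\in\mathrm{B}_b,\ X_0\ge X\}$ is continuous from above in the same sense, and every element of $\mathcal{P}:=\{\mathbb{P}\in\mathrm{ba}_+^1\mid H^*(\mathbb{P})<\infty\}$ is countably additive.
   Context: A premium principle is a map $H\colon\mathrm{B}_b\to\mathbb{R}$ with $H(X+m)=H(X)+m$ for $m\in\mathbb{R}$, $H(0)=0$, and $H(X)\ge0$ for $X\ge0$ (pointwise order). Convex means $H(\lambda X+(1-\lambda)Y)\le\lambda H(X)+(1-\lambda)H(Y)$ for $\lambda\in[0,1]$. $\mathrm{ba}_+^1$ is the set of finitely additive probability measures on $(\Omega,\mathcal{F})$, $\mathbb{E}_{\mathbb{P}}$ the associated integral, and $H^*(\mathbb{P}):=\sup_{X\in\mathrm{B}_b}(\mathbb{E}_{\mathbb{P}}(X)-H(X))$. *)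

theory Defs
  imports "HOL-Analysis.Analysis"
begin

definition Bb :: "'a measure \<Rightarrow> ('a \<Rightarrow> real) set" where
  "Bb M = {X. X \<in> borel_measurable M \<and> bounded (X ` space M)}"

definition premium_principle :: "'a measure \<Rightarrow> (('a \<Rightarrow> real) \<Rightarrow> real) \<Rightarrow> bool" where
  "premium_principle M H \<longleftrightarrow>
     (\<forall>X\<in>Bb M. \<forall>m::real. H (\<lambda>x. X x + m) = H X + m) \<and>
     H (\<lambda>x. 0) = 0 \<and>
     (\<forall>X\<in>Bb M. (\<forall>x\<in>space M. X x \<ge> 0) \<longrightarrow> H X \<ge> 0)"

definition convex_on_Bb :: "'a measure \<Rightarrow> (('a \<Rightarrow> real) \<Rightarrow> real) \<Rightarrow> bool" where
  "convex_on_Bb M H \<longleftrightarrow>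
     (\<forall>X\<in>Bb M. \<forall>Y\<in>Bb M. \<forall>l::real. 0 \<le> l \<and> l \<le> 1 \<longrightarrow>
        H (\<lambda>x. l * X x + (1 - l) * Y x) \<le> l * H X + (1 - l) * H Y)"

text \<open>Continuity from above: for every pointwise decreasing sequence in Bb M
  with pointwise infimum 0, the infimum of the values is 0.  (The pointwise
  infimum being 0 entails that all terms are nonnegative; we state this explicitly
  so that the real-valued INF is meaningful.)\<close>
definition cont_from_above :: "'a measure \<Rightarrow> (('a \<Rightarrow> real) \<Rightarrow> real) \<Rightarrow> bool" where
  "cont_from_above M H \<longleftrightarrow>
     (\<forall>Xs :: nat \<Rightarrow> 'a \<Rightarrow> real.
        (\<forall>n. Xs n \<in> Bb M) \<and>
        (\<forall>n. \<forall>x\<in>space M. Xs (Suc n) x \<le> Xs n x) \<and>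
        (\<forall>x\<in>space M. (\<forall>n. 0 \<le> Xs n x) \<and> (INF n. Xs n x) = 0)
        \<longrightarrow> (INF n. H (Xs n)) = 0)"

definition R_Max :: "'a measure \<Rightarrow> (('a \<Rightarrow> real) \<Rightarrow> real) \<Rightarrow> ('a \<Rightarrow> real) \<Rightarrow> real" where
  "R_Max M H X = Inf {H X0 | X0. X0 \<in> Bb M \<and> (\<forall>x\<in>space M. X0 x \<ge> X x)}"

definition ba1 :: "'a measure \<Rightarrow> ('a set \<Rightarrow> real) set" where
  "ba1 M = {P. (\<forall>A\<in>sets M. 0 \<le> P A) \<and> P (space M) = 1 \<and>
     (\<forall>A\<in>sets M. \<forall>B\<in>sets M. A \<inter> B = {} \<longrightarrow> P (A \<union> B) = P A + P B)}"

definition simple_Bb :: "'a measure \<Rightarrow> ('a \<Rightarrow> real) set" where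
  "simple_Bb M = {s. s \<in> borel_measurable M \<and> finite (s ` space M)}"

definition simple_int :: "'a measure \<Rightarrow> ('a set \<Rightarrow> real) \<Rightarrow> ('a \<Rightarrow> real) \<Rightarrow> real" where
  "simple_int M P s = (\<Sum>c\<in>s ` space M. c * P (s -` {c} \<inter> space M))"

definition E_fa :: "'a measure \<Rightarrow> ('a set \<Rightarrow> real) \<Rightarrow> ('a \<Rightarrow> real) \<Rightarrow> real" where
  "E_fa M P X = (SUP s\<in>{s\<in>simple_Bb M. \<forall>x\<in>space M. s x \<le> X x}. simple_int M P s)"

definition conj_H :: "'a measure \<Rightarrow> (('a \<Rightarrow> real) \<Rightarrow> real) \<Rightarrow> ('a set \<Rightarrow> real) \<Rightarrow> ereal" where
  "conj_H M H P = (SUP X\<in>Bb M. ereal (E_fa M P X - H X))"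

definition countably_additive_fa :: "'a measure \<Rightarrow> ('a set \<Rightarrow> real) \<Rightarrow> bool" where
  "countably_additive_fa M P \<longleftrightarrow>
     (\<forall>A :: nat \<Rightarrow> 'a set. range A \<subseteq> sets M \<longrightarrow> disjoint_family A \<longrightarrow>
        (\<lambda>n. P (A n)) sums P (\<Union>n. A n))"

end

theory Submission
  imports Defs
begin

lemma ba1_empty: "P \<in> ba1 M \<Longrightarrow> P {} = 0"
proof -
  assume P: "P \<in> ba1 M"
  have "P ({} \<union> {}) = P {} + P {}" using P sets.empty_sets[of M] unfolding ba1_def by blast
  then show "P {} = 0" by simp
qed

lemma ba1_add: "P \<in> ba1 M \<Longrightarrow> A \<in> sets M \<Longrightarrow> B \<in> sets M \<Longrightarrow> A \<inter> B = {} \<Longrightarrow> P (A \<union> B) = P A + P B"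
  unfolding ba1_def by blast

lemma ba1_nonneg: "P \<in> ba1 M \<Longrightarrow> A \<in> sets M \<Longrightarrow> 0 \<le> P A"
  unfolding ba1_def by blast

lemma ba1_space: "P \<in> ba1 M \<Longrightarrow> P (space M) = 1"
  unfolding ba1_def by blast

lemma ba1_mono: assumes "P \<in> ba1 M" "A \<in> sets M" "B \<in> sets M" "A \<subseteq> B" shows "P A \<le> P B"
proof -
  have "B = A \<union> (B - A)" using assms by blast
  then have "P B = P A + P (B - A)" using ba1_add[OF assms(1,2), of "B - A"] assms by auto
  then show ?thesis using ba1_nonneg[OF assms(1), of "B - A"] assms by auto
qed

lemma ba1_finite_add:
  assumes P: "P \<in> ba1 M" and fin: "finite I"
  shows "(\<forall>i\<in>I. B i \<in> sets M) \<longrightarrow> disjoint_family_on B I \<longrightarrow> P (\<Union>i\<in>I. B i) = (\<Sum>i\<in>I. P (B i))"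
  using fin
proof (induction I rule: finite_induct)
  case empty
  then show ?case using ba1_empty[OF P] by simp
next
  case (insert a F)
  show ?case
  proof (intro impI)
    assume b: "\<forall>i\<in>insert a F. B i \<in> sets M" and d: "disjoint_family_on B (insert a F)"
    have u: "(\<Union>i\<in>F. B i) \<in> sets M" using b insert by auto
    have dis: "B a \<inter> (\<Union>i\<in>F. B i) = {}" using d insert unfolding disjoint_family_on_def by auto
    have "P (\<Union>i\<in>insert a F. B i) = P (B a \<union> (\<Union>i\<in>F. B i))" by simp
    also have "\<dots> = P (B a) + P (\<Union>i\<in>F. B i)" using ba1_add[OF P _ u dis] b by auto
    also have "\<dots> = P (B a) + (\<Sum>i\<in>F. P (B i))" using insert(3) b d
      by (metis disjoint_family_on_mono insert_iff subset_insertI)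
    finally show "P (\<Union>i\<in>insert a F. B i) = (\<Sum>i\<in>insert a F. P (B i))" using insert by simp
  qed
qed

lemma simple_int_le:
  assumes P: "P \<in> ba1 M" and s: "s \<in> simple_Bb M" and le: "\<forall>x\<in>space M. s x \<le> b"
  shows "simple_int M P s \<le> b"
proof -
  let ?S = "s ` space M"
  have fin: "finite ?S" and meas: "s \<in> borel_measurable M" using s unfolding simple_Bb_def by auto
  have pre: "\<And>c. s -` {c} \<inter> space M \<in> sets M" using meas by (simp add: measurable_sets)
  have "simple_int M P s \<le> (\<Sum>c\<in>?S. b * P (s -` {c} \<inter> space M))"
    unfolding simple_int_def
  proof (rule sum_mono)
    fix c assume "c \<in> ?S"
    then have "c \<le> b" using le by auto
    then show "c * P (s -` {c} \<inter> space M) \<le> b * P (s -` {c} \<inter> space M)"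
      using ba1_nonneg[OF P pre[of c]] by (simp add: mult_right_mono)
  qed
  also have "\<dots> = b * (\<Sum>c\<in>?S. P (s -` {c} \<inter> space M))" by (simp add: sum_distrib_left)
  also have "(\<Sum>c\<in>?S. P (s -` {c} \<inter> space M)) = P (\<Union>c\<in>?S. s -` {c} \<inter> space M)"
    using ba1_finite_add[OF P fin, of "\<lambda>c. s -` {c} \<inter> space M"] pre
    unfolding disjoint_family_on_def by auto
  also have "(\<Union>c\<in>?S. s -` {c} \<inter> space M) = space M" by auto
  finally show ?thesis using ba1_space[OF P] by simp
qed

lemma ind_Bb: assumes "D \<in> sets M" shows "(\<lambda>x. l * indicator D x) \<in> Bb M"
  and "(\<lambda>x. l * indicator D x) \<in> simple_Bb M"
proof -
  have m: "(\<lambda>x. l * indicator D x) \<in> borel_measurable M" using assms by simp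
  have im: "(\<lambda>x. l * indicator D x :: real) ` space M \<subseteq> {0, l}" by (auto simp: indicator_def)
  then have "finite ((\<lambda>x. l * indicator D x :: real) ` space M)" by (rule finite_subset) simp
  then show "(\<lambda>x. l * indicator D x) \<in> Bb M" "(\<lambda>x. l * indicator D x) \<in> simple_Bb M"
    using m unfolding Bb_def simple_Bb_def by (auto intro: finite_imp_bounded)
qed

lemma E_fa_ind:
  assumes P: "P \<in> ba1 M" and D: "D \<in> sets M" and l: "l \<ge> 0"
  shows "l * P D \<le> E_fa M P (\<lambda>x. l * indicator D x)"
proof -
  let ?s = "(\<lambda>x. l * indicator D x :: real)"
  let ?A = "{s\<in>simple_Bb M. \<forall>x\<in>space M. s x \<le> ?s x}"
  have sA: "?s \<in> ?A" using ind_Bb(2)[OF D] by auto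
  have bdd: "bdd_above (simple_int M P ` ?A)"
  proof (rule bdd_aboveI2)
    fix s assume "s \<in> ?A"
    then have s1: "s \<in> simple_Bb M" and s2: "\<forall>x\<in>space M. s x \<le> l * indicator D x" by auto
    have "\<forall>x\<in>space M. s x \<le> l"
    proof
      fix x assume "x \<in> space M"
      then have "s x \<le> l * indicator D x" using s2 by blast
      also have "\<dots> \<le> l" using l by (simp add: indicator_def)
      finally show "s x \<le> l" .
    qed
    then show "simple_int M P s \<le> l" using simple_int_le[OF P s1] by blast
  qed
  have finS: "finite (?s ` space M)" using ind_Bb(2)[OF D] by (simp add: simple_Bb_def)
  have Dsub: "D \<subseteq> space M" using D sets.sets_into_space by auto
  have "simple_int M P ?s = l * P D"
  proof (cases "l = 0")
    case True then show ?thesis unfolding simple_int_def by (auto intro!: sum.neutral)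
  next
    case False
    have "simple_int M P ?s = (\<Sum>c\<in>?s ` space M \<inter> {l}. c * P (?s -` {c} \<inter> space M))"
      unfolding simple_int_def using finS
      by (intro sum.mono_neutral_right) (auto simp: indicator_def split: if_splits)
    also have "\<dots> = l * P D"
    proof (cases "D = {}")
      case True then show ?thesis using ba1_empty[OF P] False by (auto simp: indicator_def)
    next
      case nE: False
      then obtain y where "y \<in> D" by auto
      then have "?s ` space M \<inter> {l} = {l}" using Dsub by (force simp: indicator_def)
      moreover have "?s -` {l} \<inter> space M = D" using Dsub False by (auto simp: indicator_def split: if_splits)
      ultimately show ?thesis by simp
    qed
    finally show ?thesis .
  qed
  then show ?thesis unfolding E_fa_def using cSUP_upper[OF sA bdd] by simp
qed

theorem corollary3p2:
  fixes M :: "'a measure" and H :: "('a \<Rightarrow> real) \<Rightarrow> real"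
  assumes "premium_principle M H"
    and "convex_on_Bb M H"
    and "cont_from_above M H"
  shows "cont_from_above M (R_Max M H) \<and>
         (\<forall>P\<in>ba1 M. conj_H M H P < \<infinity> \<longrightarrow> countably_additive_fa M P)"
proof
  have Hpos: "\<And>X. X \<in> Bb M \<Longrightarrow> \<forall>x\<in>space M. 0 \<le> X x \<Longrightarrow> 0 \<le> H X"
    using assms(1) unfolding premium_principle_def by blast
  show "cont_from_above M (R_Max M H)"
    unfolding cont_from_above_def
  proof (intro allI impI)
    fix Xs :: "nat \<Rightarrow> 'a \<Rightarrow> real"
    assume a: "(\<forall>n. Xs n \<in> Bb M) \<and> (\<forall>n. \<forall>x\<in>space M. Xs (Suc n) x \<le> Xs n x) \<and>
        (\<forall>x\<in>space M. (\<forall>n. 0 \<le> Xs n x) \<and> (INF n. Xs n x) = 0)"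
    have HI: "(INF n. H (Xs n)) = 0" using assms(3) a unfolding cont_from_above_def by blast
    have R: "0 \<le> R_Max M H (Xs n) \<and> R_Max M H (Xs n) \<le> H (Xs n)" for n
    proof -
      let ?S = "{H X0 | X0. X0 \<in> Bb M \<and> (\<forall>x\<in>space M. X0 x \<ge> Xs n x)}"
      have mem: "H (Xs n) \<in> ?S" using a by auto
      have lb: "\<And>y. y \<in> ?S \<Longrightarrow> 0 \<le> y"
      proof -
        fix y assume "y \<in> ?S"
        then obtain X0 where "y = H X0" "X0 \<in> Bb M" "\<forall>x\<in>space M. X0 x \<ge> Xs n x" by auto
        then show "0 \<le> y" using Hpos[of X0] a by (metis order_trans)
      qed
      have "0 \<le> Inf ?S" using mem lb by (intro cInf_greatest) auto
      moreover have "bdd_below ?S" using lb by (rule bdd_belowI)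
      then have "Inf ?S \<le> H (Xs n)" using mem by (intro cInf_lower)
      ultimately show ?thesis unfolding R_Max_def by simp
    qed
    have "(INF n. R_Max M H (Xs n)) \<le> (INF n. H (Xs n))"
      using R by (intro cINF_mono) (auto intro: bdd_belowI2[where m=0])
    moreover have "0 \<le> (INF n. R_Max M H (Xs n))" using R by (intro cINF_greatest) auto
    ultimately show "(INF n. R_Max M H (Xs n)) = 0" using HI by simp
  qed
  show "\<forall>P\<in>ba1 M. conj_H M H P < \<infinity> \<longrightarrow> countably_additive_fa M P"
  proof (intro ballI impI)
    fix P assume P: "P \<in> ba1 M" and fin: "conj_H M H P < \<infinity>"
    have z: "(\<lambda>x. 0) \<in> Bb M" unfolding Bb_def by (auto simp: bounded_iff)
    have up: "\<And>X. X \<in> Bb M \<Longrightarrow> ereal (E_fa M P X - H X) \<le> conj_H M H P"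
      unfolding conj_H_def by (rule SUP_upper)
    obtain c where c: "\<And>X. X \<in> Bb M \<Longrightarrow> E_fa M P X - H X \<le> c"
    proof (cases "conj_H M H P")
      case (real r) then show ?thesis using up that by auto
    next
      case PInf then show ?thesis using fin by simp
    next
      case MInf then show ?thesis using up[OF z] by simp
    qed
    show "countably_additive_fa M P"
      unfolding countably_additive_fa_def
    proof (intro allI impI)
      fix A :: "nat \<Rightarrow> 'a set" assume As: "range A \<subseteq> sets M" and dA: "disjoint_family A"
      define U where "U = (\<Union>n. A n)"
      define D where "D m = U - (\<Union>n<m. A n)" for m
      have U: "U \<in> sets M" using As unfolding U_def by auto
      have FU: "(\<Union>n<m. A n) \<in> sets M" for m using As by auto
      have Dm: "D m \<in> sets M" for m using U FU unfolding D_def by auto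
      have Dsuc: "D (Suc m) \<subseteq> D m" for m unfolding D_def by (auto simp: lessThan_Suc)
      have Ddec: "m \<le> m' \<Longrightarrow> D m' \<subseteq> D m" for m m'
        by (induction m' rule: dec_induct) (use Dsuc in auto)
      have PU: "P U = (\<Sum>n<m. P (A n)) + P (D m)" for m
      proof -
        have "U = (\<Union>n<m. A n) \<union> D m" unfolding D_def U_def by auto
        then have "P U = P (\<Union>n<m. A n) + P (D m)"
          using ba1_add[OF P FU Dm, of m m] unfolding D_def by auto
        moreover have "P (\<Union>n<m. A n) = (\<Sum>n<m. P (A n))"
          using ba1_finite_add[OF P finite_lessThan[of m], of A] As dA
          by (auto intro: disjoint_family_on_mono[of _ UNIV])
        ultimately show ?thesis by simp
      qed
      have key: "\<exists>m. P (D m) < e" if e: "e > 0" for e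
      proof -
        define l where "l = (\<bar>c\<bar> + 2) / e"
        have l: "l > 0" using e unfolding l_def by (simp add: add_pos_nonneg)
        let ?X = "\<lambda>m x. l * indicator (D m) x :: real"
        have XB: "?X m \<in> Bb M" for m using ind_Bb(1)[OF Dm] .
        have "(\<forall>m. ?X m \<in> Bb M) \<and> (\<forall>m. \<forall>x\<in>space M. ?X (Suc m) x \<le> ?X m x) \<and>
          (\<forall>x\<in>space M. (\<forall>m. 0 \<le> ?X m x) \<and> (INF m. ?X m x) = 0)"
        proof (intro conjI allI ballI)
          fix m show "?X m \<in> Bb M" by (rule XB)
        next
          fix m x show "?X (Suc m) x \<le> ?X m x" using Dsuc[of m] l by (auto simp: indicator_def)
        next
          fix m x show "0 \<le> ?X m x" using l by auto
        next
          fix x assume "x \<in> space M"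
          have "\<exists>m. x \<notin> D m"
          proof (cases "x \<in> U")
            case True then obtain k where "x \<in> A k" unfolding U_def by auto
            then have "x \<notin> D (Suc k)" unfolding D_def by auto
            then show ?thesis by blast
          next
            case False then show ?thesis unfolding D_def by auto
          qed
          then obtain m where "x \<notin> D m" by blast
          then have "0 \<in> range (\<lambda>m. ?X m x)" by (auto intro!: image_eqI[where x=m])
          then show "(INF m. ?X m x) = 0" using l by (intro cInf_eq_minimum) auto
        qed
        then have I0: "(INF m. H (?X m)) = 0"
          using spec[OF assms(3)[unfolded cont_from_above_def], of ?X] by (rule rev_mp)
        have bddH: "bdd_below (range (\<lambda>m. H (?X m)))"
          using Hpos[OF XB] l by (intro bdd_belowI2[where m=0]) auto
        have "(INF m. H (?X m)) < 1" using I0 by simp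
        then have "\<exists>m\<in>UNIV. H (?X m) < 1"
          using cINF_less_iff[of UNIV "\<lambda>m. H (?X m)" 1, OF UNIV_not_empty bddH] by blast
        then obtain m where m: "H (?X m) < 1" by blast
        have "l * P (D m) \<le> E_fa M P (?X m)" using E_fa_ind[OF P Dm] l by simp
        also have "\<dots> \<le> c + H (?X m)" using c[OF XB[of m]] by simp
        finally have "l * P (D m) < c + 1" using m by simp
        then have "l * P (D m) < l * e" using e unfolding l_def by simp
        then show ?thesis using l by auto
      qed
      have "(\<lambda>m. P (D m)) \<longlonglongrightarrow> 0"
      proof (rule LIMSEQ_I)
        fix r :: real assume "0 < r"
        then obtain m where m: "P (D m) < r" using key by blast
        show "\<exists>no. \<forall>n\<ge>no. norm (P (D n) - 0) < r"
        proof (intro exI allI impI)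
          fix n assume "m \<le> n"
          then have "P (D n) \<le> P (D m)" using ba1_mono[OF P Dm Dm Ddec] by blast
          then show "norm (P (D n) - 0) < r" using m ba1_nonneg[OF P Dm[of n]] by simp
        qed
      qed
      then have "(\<lambda>m. P U - P (D m)) \<longlonglongrightarrow> P U - 0" by (intro tendsto_intros)
      moreover have "(\<lambda>m. P U - P (D m)) = (\<lambda>m. \<Sum>n<m. P (A n))" using PU by (auto simp: algebra_simps)
      ultimately show "(\<lambda>n. P (A n)) sums P (\<Union>n. A n)" unfolding sums_def U_def by simp
    qed
  qed
qed

end
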